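(* For every $n\in\{2,6,10,\dots\}$, every maximal increasing path of $f_n$ starting at the origin $(0,\dots,0)$ ends at the all-ones vertex $(1,1,\dots,1)$. Equivalently, the only local maximum of $f_n$ reachable from the origin by local search is $(1,\dots,1)$.
   Context: For $n\in\{2,6,10,\dots\}$ define polynomials $f_n$ in variables $x_1,\dots,x_n$ (evaluated on $\{0,1\}^n$) recursively. Set $f_2(x_1,x_2):=x_1+x_2$. For $n\in\{2,6,10,\dots\}$, write $\mathbf{x}=(x_1,\dots,x_n)$, $S:=\sum_{i=1}^n x_i$, let $M_n:=\max_{\{0,1\}^n} f_n-\min_{\{0,1\}^n} f_n+1$, and define $f_{n+4}(\mathbf{x},x_{n+1},x_{n+2},x_{n+3},x_{n+4}) := f_n(\mathbf{x}) - M_n n^2 x_{n+1} + M_n(n+1) S x_{n+1} - x_{n+2} - 2M_n n S x_{n+2} + 2M_n n(n+2) x_{n+1}x_{n+2} - 4 S x_{n+3} + 2x_{n+1}x_{n+3} + 2x_{n+2}x_{n+3} - 3x_{n+3} + (M_n(n-1)+4) S x_{n+4} + 6M_n n^2 x_{n+3}x_{n+4} - 5M_n n^2 x_{n+4}$. For a function $f:\{0,1\}^m\to\mathbb{R}$, an increasing path is a sequence of vertices $v_0,v_1,\dots,v_k$ of $\{0,1\}^m$ such that consecutive vertices differ in exactly one coordinate and $f(v_{j+1})>f(v_j)$ for all $j$. It is maximal if it cannot be extended, i.e. its last vertex is a local maximum (no neighbor has strictly larger value). The length of the path is $k$. *)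

theory Defs
  imports Main
begin

text \<open>Vertices of the cube {0,1}^m are represented as functions x :: nat => int
  with x i in {0,1} for i < m and x i = 0 for i >= m. Coordinate x_(i+1) of the
  paper is x i here (0-based indexing).\<close>

definition cube :: "nat \<Rightarrow> (nat \<Rightarrow> int) set" where
  "cube m = {x. (\<forall>i<m. x i \<in> {0,1}) \<and> (\<forall>i\<ge>m. x i = 0)}"

definition origin :: "nat \<Rightarrow> int" where
  "origin = (\<lambda>i. 0)"

definition ones :: "nat \<Rightarrow> nat \<Rightarrow> int" where
  "ones m = (\<lambda>i. if i < m then 1 else 0)"

text \<open>fpoly k is the function f_n for n = 4k+2.\<close>
primrec fpoly :: "nat \<Rightarrow> (nat \<Rightarrow> int) \<Rightarrow> int" where
  "fpoly 0 = (\<lambda>x. x 0 + x 1)"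
| "fpoly (Suc k) =
     (let g = fpoly k; n = 4 * k + 2;
          M = Max (g ` cube n) - Min (g ` cube n) + 1;
          ni = int n
      in (\<lambda>x. let S = (\<Sum>i<n. x i);
                  a = x n; b = x (n+1); c = x (n+2); d = x (n+3)
              in g x - M * ni^2 * a + M * (ni+1) * S * a - b - 2 * M * ni * S * b
                 + 2 * M * ni * (ni+2) * a * b - 4 * S * c + 2 * a * c + 2 * b * c
                 - 3 * c + (M * (ni - 1) + 4) * S * d + 6 * M * ni^2 * c * d
                 - 5 * M * ni^2 * d))"

definition adjacent :: "nat \<Rightarrow> (nat \<Rightarrow> int) \<Rightarrow> (nat \<Rightarrow> int) \<Rightarrow> bool" where
  "adjacent m u v \<longleftrightarrow> u \<in> cube m \<and> v \<in> cube m \<and> card {i. i < m \<and> u i \<noteq> v i} = 1"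

definition increasing_path :: "((nat \<Rightarrow> int) \<Rightarrow> int) \<Rightarrow> nat \<Rightarrow> (nat \<Rightarrow> int) list \<Rightarrow> bool" where
  "increasing_path f m vs \<longleftrightarrow> vs \<noteq> [] \<and> (\<forall>v\<in>set vs. v \<in> cube m) \<and>
     (\<forall>j. Suc j < length vs \<longrightarrow> adjacent m (vs ! j) (vs ! Suc j) \<and> f (vs ! j) < f (vs ! Suc j))"

definition local_max :: "((nat \<Rightarrow> int) \<Rightarrow> int) \<Rightarrow> nat \<Rightarrow> (nat \<Rightarrow> int) \<Rightarrow> bool" where
  "local_max f m v \<longleftrightarrow> v \<in> cube m \<and> (\<forall>w. adjacent m v w \<longrightarrow> \<not> f v < f w)"

definition maximal_increasing_path :: "((nat \<Rightarrow> int) \<Rightarrow> int) \<Rightarrow> nat \<Rightarrow> (nat \<Rightarrow> int) list \<Rightarrow> bool" where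
  "maximal_increasing_path f m vs \<longleftrightarrow> increasing_path f m vs \<and> local_max f m (last vs)"

end

theory Submission
  imports Defs
begin


definition trunc :: "nat \<Rightarrow> (nat \<Rightarrow> int) \<Rightarrow> nat \<Rightarrow> int" where
  "trunc n v = (\<lambda>i. if i < n then v i else 0)"

definition flip :: "(nat \<Rightarrow> int) \<Rightarrow> nat \<Rightarrow> nat \<Rightarrow> int" where
  "flip v j = v(j := 1 - v j)"

inductive reach :: "((nat \<Rightarrow> int) \<Rightarrow> int) \<Rightarrow> nat \<Rightarrow> (nat \<Rightarrow> int) \<Rightarrow> bool" for f m where
  r0: "reach f m origin"
| rs: "reach f m v \<Longrightarrow> adjacent m v w \<Longrightarrow> f v < f w \<Longrightarrow> reach f m w"

lemma adjacent_iff: "adjacent m u w \<longleftrightarrow> u \<in> cube m \<and> (\<exists>j<m. w = flip u j)"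
proof
  assume A: "adjacent m u w"
  then have u: "u \<in> cube m" and w: "w \<in> cube m" and c: "card {i. i < m \<and> u i \<noteq> w i} = 1"
    unfolding adjacent_def by blast+
  from c obtain j where j: "{i. i < m \<and> u i \<noteq> w i} = {j}"
    by (metis One_nat_def card_1_singleton_iff)
  have "j \<in> {i. i < m \<and> u i \<noteq> w i}" using j by blast
  then have jm: "j < m" and ne: "u j \<noteq> w j" by blast+
  have "w = flip u j"
  proof
    fix i show "w i = flip u j i"
    proof (cases "i = j")
      case True
      have "u j = 0 \<or> u j = 1" "w j = 0 \<or> w j = 1" using u w jm unfolding cube_def by blast+
      then show ?thesis using True ne unfolding flip_def by force
    next
      case False
      show ?thesis
      proof (cases "i < m")
        case True
        have "i \<notin> {i. i < m \<and> u i \<noteq> w i}" using j False by blast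
        then show ?thesis using True False unfolding flip_def by simp
      next
        case False
        then have "u i = 0" "w i = 0" using u w unfolding cube_def by simp_all
        then show ?thesis using `i \<noteq> j` unfolding flip_def by simp
      qed
    qed
  qed
  then show "u \<in> cube m \<and> (\<exists>j<m. w = flip u j)" using u jm by blast
next
  assume "u \<in> cube m \<and> (\<exists>j<m. w = flip u j)"
  then obtain j where u: "u \<in> cube m" and jm: "j < m" and w: "w = flip u j" by blast
  have uj: "u j = 0 \<or> u j = 1" using u jm unfolding cube_def by blast
  have wc: "w \<in> cube m"
    unfolding cube_def
  proof (intro CollectI conjI allI impI)
    fix i assume "i < m" then show "w i \<in> {0,1}" using u uj unfolding w flip_def cube_def by auto
  next
    fix i assume "m \<le> i" then show "w i = 0" using u jm unfolding w flip_def cube_def by auto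
  qed
  have ne: "u j \<noteq> 1 - u j" using uj by linarith
  have "{i. i < m \<and> u i \<noteq> w i} = {j}" using jm ne unfolding w flip_def by auto
  then show "adjacent m u w" using u wc unfolding adjacent_def by simp
qed

lemma cube_vals: "v \<in> cube m \<Longrightarrow> i < m \<Longrightarrow> v i = 0 \<or> v i = 1"
  by (auto simp: cube_def)

lemma finite_cube: "finite (cube n)"
proof -
  let ?h = "\<lambda>x::nat\<Rightarrow>int. {i. i < n \<and> x i = 1}"
  have "inj_on ?h (cube n)"
  proof
    fix x y assume x: "x \<in> cube n" and y: "y \<in> cube n" and e: "?h x = ?h y"
    show "x = y"
    proof
      fix i show "x i = y i"
      proof (cases "i < n")
        case True
        then have "x i = 1 \<longleftrightarrow> y i = 1" using e by blast
        then show ?thesis using cube_vals[OF x True] cube_vals[OF y True] by auto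
      next
        case False then show ?thesis using x y by (auto simp: cube_def)
      qed
    qed
  qed
  moreover have "?h ` cube n \<subseteq> Pow {..<n}" by auto
  then have "finite (?h ` cube n)" by (rule finite_subset) auto
  ultimately show ?thesis using finite_imageD by blast
qed

lemma origin_cube: "origin \<in> cube n" by (simp add: cube_def origin_def)
lemma ones_cube: "ones n \<in> cube n" by (simp add: cube_def ones_def)

lemma trunc_cube: "v \<in> cube m \<Longrightarrow> n \<le> m \<Longrightarrow> trunc n v \<in> cube n"
  by (auto simp: cube_def trunc_def)

lemma sum_flip_in: "j < n \<Longrightarrow> (\<Sum>i<n. flip v j i) = (\<Sum>i<n. v i) + 1 - 2 * v j"
proof -
  assume j: "j < n"
  have "(\<Sum>i<n. flip v j i) = flip v j j + (\<Sum>i\<in>{..<n}-{j}. flip v j i)"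
    using j by (simp add: sum.remove)
  also have "(\<Sum>i\<in>{..<n}-{j}. flip v j i) = (\<Sum>i\<in>{..<n}-{j}. v i)"
    by (rule sum.cong) (auto simp: flip_def)
  also have "(\<Sum>i<n. v i) = v j + (\<Sum>i\<in>{..<n}-{j}. v i)"
    using j by (simp add: sum.remove)
  ultimately show ?thesis by (simp add: flip_def)
qed

lemma sum_flip_out: "n \<le> j \<Longrightarrow> (\<Sum>i<n. flip v j i) = (\<Sum>i<n. v i)"
  by (rule sum.cong) (auto simp: flip_def)

lemma sum_bounds: "v \<in> cube m \<Longrightarrow> n \<le> m \<Longrightarrow> 0 \<le> (\<Sum>i<n. v i) \<and> (\<Sum>i<n. v i) \<le> int n"
proof -
  assume v: "v \<in> cube m" and nm: "n \<le> m"
  have b: "0 \<le> v i \<and> v i \<le> 1" if "i < n" for i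
  proof -
    have "i < m" using that nm by simp
    then show ?thesis using cube_vals[OF v] by fastforce
  qed
  have "0 \<le> (\<Sum>i<n. v i)" using b by (intro sum_nonneg) auto
  moreover have "(\<Sum>i<n. v i) \<le> (\<Sum>i<n. (1::int))" using b by (intro sum_mono) auto
  ultimately show ?thesis by simp
qed

lemma sum_full: "t \<in> cube n \<Longrightarrow> int n \<le> (\<Sum>i<n. t i) \<Longrightarrow> t = ones n"
proof -
  assume t: "t \<in> cube n" and s: "int n \<le> (\<Sum>i<n. t i)"
  have b: "\<And>i. i < n \<Longrightarrow> t i \<le> 1" using cube_vals[OF t] by fastforce
  have "\<forall>i<n. t i = 1"
  proof (rule ccontr)
    assume "\<not> (\<forall>i<n. t i = 1)"
    then obtain j where j: "j < n" "t j \<noteq> 1" by auto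
    then have "t j \<le> 0" using cube_vals[OF t j(1)] by auto
    have "(\<Sum>i<n. t i) = t j + (\<Sum>i\<in>{..<n}-{j}. t i)" using j by (simp add: sum.remove)
    also have "(\<Sum>i\<in>{..<n}-{j}. t i) \<le> (\<Sum>i\<in>{..<n}-{j}. 1)" using b by (intro sum_mono) auto
    also have "(\<Sum>i\<in>{..<n}-{j}. (1::int)) = int n - 1" using j by simp
    finally show False using s `t j \<le> 0` by simp
  qed
  then show ?thesis using t by (auto simp: ones_def cube_def)
qed

lemma sum_zero: "t \<in> cube n \<Longrightarrow> (\<Sum>i<n. t i) \<le> 0 \<Longrightarrow> t = origin"
proof -
  assume t: "t \<in> cube n" and s: "(\<Sum>i<n. t i) \<le> 0"
  have b: "\<And>i. i < n \<Longrightarrow> 0 \<le> t i" using cube_vals[OF t] by fastforce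
  have "\<forall>i<n. t i = 0"
  proof (rule ccontr)
    assume "\<not> (\<forall>i<n. t i = 0)"
    then obtain j where j: "j < n" "t j \<noteq> 0" by auto
    then have "t j \<ge> 1" using cube_vals[OF t j(1)] by auto
    have "(\<Sum>i<n. t i) = t j + (\<Sum>i\<in>{..<n}-{j}. t i)" using j by (simp add: sum.remove)
    moreover have "0 \<le> (\<Sum>i\<in>{..<n}-{j}. t i)" using b by (intro sum_nonneg) auto
    ultimately show False using s `t j \<ge> 1` by simp
  qed
  then show ?thesis unfolding origin_def
  proof -
    assume h: "\<forall>i<n. t i = 0"
    show "t = (\<lambda>i. 0)"
    proof
      fix i show "t i = 0" using h t by (cases "i < n") (auto simp: cube_def)
    qed
  qed
qed


definition G :: "int \<Rightarrow> int \<Rightarrow> int \<Rightarrow> int \<Rightarrow> int \<Rightarrow> int \<Rightarrow> int \<Rightarrow> int" where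
  "G M ni S a b c d = - M * ni^2 * a + M * (ni+1) * S * a - b - 2 * M * ni * S * b
                 + 2 * M * ni * (ni+2) * a * b - 4 * S * c + 2 * a * c + 2 * b * c
                 - 3 * c + (M * (ni - 1) + 4) * S * d + 6 * M * ni^2 * c * d
                 - 5 * M * ni^2 * d"

lemma fpoly_Suc: "fpoly (Suc k) x = fpoly k x + G (Max (fpoly k ` cube (4*k+2)) - Min (fpoly k ` cube (4*k+2)) + 1)
   (int (4*k+2)) (\<Sum>i<4*k+2. x i) (x (4*k+2)) (x (4*k+2+1)) (x (4*k+2+2)) (x (4*k+2+3))"
  unfolding fpoly.simps Let_def G_def by algebra

lemma fpoly_dep: "(\<forall>i<4*k+2. x i = y i) \<Longrightarrow> fpoly k x = fpoly k y"
proof (induction k arbitrary: x y)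
  case 0
  then show ?case by simp
next
  case (Suc k)
  have a: "\<forall>i<4*k+2. x i = y i" using Suc.prems by simp
  have s: "(\<Sum>i<4*k+2. x i) = (\<Sum>i<4*k+2. y i)" using a by (intro sum.cong) auto
  have e: "x (4*k+2+j) = y (4*k+2+j)" if "j < 4" for j using Suc.prems that by simp
  show ?case unfolding fpoly_Suc using Suc.IH[OF a] s e[of 0] e[of 1] e[of 2] e[of 3] by simp
qed

lemma trunc_flip_in: "j < n \<Longrightarrow> trunc n (flip v j) = flip (trunc n v) j"
  by (auto simp: trunc_def flip_def)
lemma trunc_flip_out: "n \<le> j \<Longrightarrow> trunc n (flip v j) = trunc n v"
  by (auto simp: trunc_def flip_def)
lemma sum_trunc: "(\<Sum>i<n. trunc n v i) = (\<Sum>i<n. v i)"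
  by (rule sum.cong) (auto simp: trunc_def)



lemma G_S: "G M ni (S+e) a b c d = G M ni S a b c d + e*((M*ni+M)*a - 2*(M*ni)*b - 4*c + (M*ni - M + 4)*d)"
  unfolding G_def power2_eq_square by algebra

definition G' :: "int \<Rightarrow> int \<Rightarrow> int \<Rightarrow> int \<Rightarrow> int \<Rightarrow> int \<Rightarrow> int \<Rightarrow> int \<Rightarrow> int \<Rightarrow> int \<Rightarrow> int" where
  "G' M P Q U V S a b c d = -Q*a + (V+U)*a - b - 2*V*b + 2*(Q+2*P)*a*b - 4*S*c + 2*a*c + 2*b*c - 3*c
     + (V - U + 4*S)*d + 6*Q*c*d - 5*Q*d"

lemma G_eq: "G M ni S a b c d = G' M (M*ni) (M*ni*ni) (M*S) (M*ni*S) S a b c d"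
  unfolding G_def G'_def power2_eq_square by algebra

lemma atoms:
  fixes M ni S :: int
  assumes "M \<ge> 1" "ni \<ge> 2" "0 \<le> S" "S \<le> ni"
  shows "M*ni \<ge> 2*M \<and> M*ni*ni \<ge> 2*(M*ni) \<and> M*ni*ni \<ge> 2*ni \<and> 0 \<le> M*S \<and> M*S \<le> M*ni
    \<and> M*S \<le> M*ni*S \<and> M*ni*S \<le> M*ni*ni"
proof -
  have 1: "M*ni \<ge> M*2" using assms by (intro mult_left_mono) auto
  have 2: "M*ni*ni \<ge> (M*ni)*2" using assms 1 by (intro mult_left_mono) auto
  have 3: "M*ni*ni \<ge> 1*ni*ni" using assms by (intro mult_right_mono) auto
  have 4: "1*ni*ni \<ge> 1*ni*2" using assms by (intro mult_left_mono) auto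
  have 5: "0 \<le> M*S" using assms by simp
  have 6: "M*S \<le> M*ni" using assms by (intro mult_left_mono) auto
  have 7: "M*1*S \<le> M*ni*S" using assms by (intro mult_right_mono mult_left_mono) auto
  have 8: "(M*ni)*S \<le> (M*ni)*ni" using assms 1 by (intro mult_left_mono) auto
  show ?thesis using 1 2 3 4 5 6 7 8 by simp
qed

lemma T_A_a:
  fixes M ni S :: int
  assumes "M \<ge> 1" "ni \<ge> 2" "S \<le> ni" "G M ni S 0 0 0 0 < G M ni S 1 0 0 0"
  shows "S = ni"
proof -
  have e: "G M ni S 1 0 0 0 - G M ni S 0 0 0 0 = M * ((ni+1)*S - ni*ni)"
    unfolding G_def power2_eq_square by algebra
  then have "0 < M * ((ni+1)*S - ni*ni)" using assms(4) by linarith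
  then have p: "ni*ni < (ni+1)*S" using assms(1) by (simp add: zero_less_mult_iff)
  show ?thesis
  proof (rule ccontr)
    assume "S \<noteq> ni"
    then have "S \<le> ni - 1" using assms(3) by simp
    then have "(ni+1)*S \<le> (ni+1)*(ni-1)" using assms(2) by (intro mult_left_mono) auto
    then show False using p by (simp add: algebra_simps)
  qed
qed



lemma G_a: "G M ni S 1 b c d = G M ni S 0 b c d + (-(M*ni*ni) + M*ni*S + M*S + 2*(M*ni*ni)*b + 4*(M*ni)*b + 2*c)"
  unfolding G_def power2_eq_square by algebra
lemma G_b: "G M ni S a 1 c d = G M ni S a 0 c d + (-1 - 2*(M*ni*S) + 2*(M*ni*ni)*a + 4*(M*ni)*a + 2*c)"
  unfolding G_def power2_eq_square by algebra
lemma G_c: "G M ni S a b 1 d = G M ni S a b 0 d + (-4*S + 2*a + 2*b - 3 + 6*(M*ni*ni)*d)"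
  unfolding G_def power2_eq_square by algebra
lemma G_d: "G M ni S a b c 1 = G M ni S a b c 0 + (M*ni*S - M*S + 4*S + 6*(M*ni*ni)*c - 5*(M*ni*ni))"
  unfolding G_def power2_eq_square by algebra

lemma step:
  fixes g F :: "(nat \<Rightarrow> int) \<Rightarrow> int" and n :: nat and M :: int
  assumes n2: "n \<ge> 2"
    and dep: "\<And>x. g x = g (trunc n x)"
    and IH: "\<And>v. reach g n v \<Longrightarrow> local_max g n v \<Longrightarrow> v = ones n"
    and Mdef: "M = Max (g ` cube n) - Min (g ` cube n) + 1"
    and Fdef: "\<And>x. F x = g x + G M (int n) (\<Sum>i<n. x i) (x n) (x (n+1)) (x (n+2)) (x (n+3))"
  shows "reach F (n+4) v \<Longrightarrow> local_max F (n+4) v \<Longrightarrow> v = ones (n+4)"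
proof -
  define ni where "ni = int n"
  have ni2: "ni \<ge> 2" using n2 by (simp add: ni_def)
  have gap: "g t' - g t < M" if "t \<in> cube n" "t' \<in> cube n" for t t'
  proof -
    have fin: "finite (g ` cube n)" using finite_cube by simp
    have "g t' \<le> Max (g ` cube n)" using fin that by simp
    moreover have "Min (g ` cube n) \<le> g t" using fin that by simp
    ultimately show ?thesis using Mdef by simp
  qed
  have M1: "M \<ge> 1" using gap[OF origin_cube origin_cube] by simp
  define Sm where "Sm v = (\<Sum>i<n. v i)" for v :: "nat \<Rightarrow> int"
  define st where "st v = (v n, v (n+1), v (n+2), v (n+3))" for v :: "nat \<Rightarrow> int"
  have Fv: "F v = g (trunc n v) + G M ni (Sm v) (v n) (v (n+1)) (v (n+2)) (v (n+3))" for v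
    using Fdef dep by (simp add: Sm_def ni_def)
  define Inv where "Inv v \<longleftrightarrow> v \<in> cube (n+4) \<and> (
      (st v = (0,0,0,0) \<and> reach g n (trunc n v)) \<or>
      (st v = (1,0,0,0) \<and> trunc n v = ones n) \<or>
      st v = (1,1,0,0) \<or>
      (st v = (1,1,1,0) \<and> trunc n v = origin) \<or>
      (st v = (1,1,1,1) \<and> reach g n (trunc n v)))" for v
  have Sb: "0 \<le> Sm v \<and> Sm v \<le> ni" if "v \<in> cube (n+4)" for v
    using sum_bounds[OF that, of n] by (simp add: Sm_def ni_def)
  have tc: "trunc n v \<in> cube n" if "v \<in> cube (n+4)" for v
    using trunc_cube[OF that] by simp
  have Str: "Sm (trunc n v) = Sm v" for v by (simp add: Sm_def sum_trunc)
  have Sones: "Sm (ones n) = ni" by (simp add: Sm_def ones_def ni_def)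
  have Sorig: "Sm origin = 0" by (simp add: Sm_def origin_def)
  have Sm_tr: "Sm v = Sm (trunc n v)" for v by (simp add: Str)
  have fl_in: "trunc n (flip v j) = flip (trunc n v) j \<and> Sm (flip v j) = Sm v + (1 - 2 * v j)
      \<and> st (flip v j) = st v \<and> trunc n v j = v j" if "j < n" for v j
    using that sum_flip_in[OF that, of v] trunc_flip_in[OF that, of v]
    by (simp add: Sm_def st_def flip_def trunc_def)
  have fl_out: "trunc n (flip v j) = trunc n v \<and> Sm (flip v j) = Sm v" if "n \<le> j" for v j
    using that sum_flip_out[OF that, of v] by (simp add: trunc_flip_out Sm_def)
  have AT: "M*ni \<ge> 2*M" "M*ni*ni \<ge> 2*(M*ni)" "M*ni*ni \<ge> 2*ni" "0 \<le> M*Sm v" "M*Sm v \<le> M*ni"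
    "M*Sm v \<le> M*ni*Sm v" "M*ni*Sm v \<le> M*ni*ni" "0 \<le> Sm v" "Sm v \<le> ni" if "v \<in> cube (n+4)" for v
    using atoms[OF M1 ni2] Sb[OF that] by blast+
  have Fin: "F (flip v j) = g (flip (trunc n v) j) + G M ni (Sm v) (v n) (v (n+1)) (v (n+2)) (v (n+3))
     + (1 - 2 * v j) * ((M*ni+M)*v n - 2*(M*ni)*v (n+1) - 4*v (n+2) + (M*ni - M + 4)*v (n+3))"
    if "j < n" for v j
  proof -
    have "F (flip v j) = g (flip (trunc n v) j) + G M ni (Sm v + (1 - 2 * v j)) (v n) (v (n+1)) (v (n+2)) (v (n+3))"
      using Fv[of "flip v j"] fl_in[OF that, of v] by (simp add: st_def)
    then show ?thesis by (simp only: G_S)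
  qed
  have Fout: "F (flip v j) = g (trunc n v) + G M ni (Sm v) (flip v j n) (flip v j (n+1)) (flip v j (n+2)) (flip v j (n+3))"
    if "n \<le> j" for v j
    using Fv[of "flip v j"] fl_out[OF that, of v] by simp
  have inv: "Inv v" if "reach F (n+4) v" for v
    using that
  proof (induction rule: reach.induct)
    case r0
    have "trunc n origin = origin" by (auto simp: trunc_def origin_def)
    moreover have "st origin = (0,0,0,0)" by (simp add: st_def origin_def)
    ultimately show ?case using origin_cube[of "n+4"] reach.r0[of g n] by (simp add: Inv_def)
  next
    case (rs v w)
    from rs.hyps(2) obtain j where j: "j < n+4" and w: "w = flip v j" and vc: "v \<in> cube (n+4)"
      by (auto simp: adjacent_iff)
    have wc: "w \<in> cube (n+4)" using rs.hyps(2) by (simp add: adjacent_def)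
    have lt: "F v < F w" by fact
    have Iv: "Inv v" by fact
    define t where "t = trunc n v"
    have tcv: "t \<in> cube n" using tc[OF vc] by (simp add: t_def)
    have Fv': "F v = g t + G M ni (Sm v) (v n) (v (n+1)) (v (n+2)) (v (n+3))" using Fv t_def by simp
    note at = AT[OF vc] M1 ni2
    consider (X) "j < n" | (Ja) "j = n" | (Jb) "j = n+1" | (Jc) "j = n+2" | (Jd) "j = n+3" using j by linarith
    then show ?case
    proof cases
      case X
      have Fw: "F w = g (flip t j) + G M ni (Sm v) (v n) (v (n+1)) (v (n+2)) (v (n+3))
       + (1 - 2 * v j) * ((M*ni+M)*v n - 2*(M*ni)*v (n+1) - 4*v (n+2) + (M*ni - M + 4)*v (n+3))"
        using Fin[OF X, of v] w t_def by simp
      have tw: "trunc n w = flip t j" and stw: "st w = st v" and tj: "t j = v j"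
        using fl_in[OF X, of v] w t_def by auto
      have adj: "adjacent n t (flip t j)" using tcv X by (auto simp: adjacent_iff)
      have gp: "g (flip t j) - g t < M" "g t - g (flip t j) < M"
        using gap adj tcv by (auto simp: adjacent_def)
      from Iv[unfolded Inv_def] show ?thesis
      proof (elim conjE disjE)
        assume s: "st v = (0,0,0,0)" and r: "reach g n (trunc n v)"
        have "g t < g (flip t j)" using lt Fv' Fw s by (simp add: st_def)
        then have "reach g n (flip t j)" using reach.rs[OF r[folded t_def] adj] by simp
        then show ?thesis using wc tw stw s by (simp add: Inv_def)
      next
        assume s: "st v = (1,0,0,0)" and r: "trunc n v = ones n"
        have "v j = 1" using tj r X t_def by (simp add: ones_def)
        then have "F w - F v = g (flip t j) - g t - (M*ni) - M" using Fv' Fw s by (simp add: st_def)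
        then show ?thesis using lt gp at by linarith
      next
        assume s: "st v = (1,1,0,0)"
        then show ?thesis using wc stw by (simp add: Inv_def)
      next
        assume s: "st v = (1,1,1,0)" and r: "trunc n v = origin"
        have "v j = 0" using tj r X t_def by (simp add: origin_def)
        then have "F w - F v = g (flip t j) - g t + (M*ni + M - 2*(M*ni) - 4)" using Fv' Fw s by (simp add: st_def)
        then show ?thesis using lt gp at by linarith
      next
        assume s: "st v = (1,1,1,1)" and r: "reach g n (trunc n v)"
        have "F w - F v = g (flip t j) - g t" using Fv' Fw s by (simp add: st_def algebra_simps)
        then have "g t < g (flip t j)" using lt by linarith
        then have "reach g n (flip t j)" using reach.rs[OF r[folded t_def] adj] by simp
        then show ?thesis using wc tw stw s by (simp add: Inv_def)
      qed
    next
      case Ja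
      have Fw: "F w = g t + G M ni (Sm v) (flip v j n) (flip v j (n+1)) (flip v j (n+2)) (flip v j (n+3))"
        using Fout[of j v] w Ja t_def by simp
      have tw: "trunc n w = t" using fl_out[of j v] w Ja t_def by simp
      have Stv: "Sm t = Sm v" using Str t_def by simp
      from Iv[unfolded Inv_def] show ?thesis
      proof (elim conjE disjE)
        assume s: "st v = (0,0,0,0)" and r: "reach g n (trunc n v)"
        have e1: "F w = g t + G M ni (Sm v) 1 0 0 0" using Fw s Ja by (simp add: st_def flip_def)
        have e2: "F v = g t + G M ni (Sm v) 0 0 0 0" using Fv' s by (simp add: st_def)
        have "G M ni (Sm v) 0 0 0 0 < G M ni (Sm v) 1 0 0 0" using e1 e2 lt by simp
        then have "Sm v = ni" using T_A_a[OF M1 ni2] at by blast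
        then have "t = ones n" using sum_full[OF tcv] Stv by (simp add: ni_def Sm_def)
        moreover have "st w = (1,0,0,0)" using s w Ja by (simp add: st_def flip_def)
        ultimately show ?thesis using wc tw t_def by (simp add: Inv_def)
      next
        assume s: "st v = (1,0,0,0)" and r: "trunc n v = ones n"
        have SS: "Sm v = ni" using Stv r t_def Sones by simp
        have SS2: "M*Sm v = M*ni" "M*ni*Sm v = M*ni*ni" using SS by simp_all
        have e1: "F w = g t + G M ni (Sm v) 0 0 0 0" using Fw s Ja by (simp add: st_def flip_def)
        have e2: "F v = g t + G M ni (Sm v) 1 0 0 0" using Fv' s by (simp add: st_def)
        show ?thesis using lt e1 e2 G_a[of M ni "Sm v" 0 0 0] at SS SS2 by linarith
      next
        assume s: "st v = (1,1,0,0)"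
        have e1: "F w = g t + G M ni (Sm v) 0 1 0 0" using Fw s Ja by (simp add: st_def flip_def)
        have e2: "F v = g t + G M ni (Sm v) 1 1 0 0" using Fv' s by (simp add: st_def)
        show ?thesis using lt e1 e2 G_a[of M ni "Sm v" 1 0 0] at by linarith
      next
        assume s: "st v = (1,1,1,0)" and r: "trunc n v = origin"
        have SS: "Sm v = 0" using Stv r t_def Sorig by simp
        have SS2: "M*Sm v = 0" "M*ni*Sm v = 0" using SS by simp_all
        have e1: "F w = g t + G M ni (Sm v) 0 1 1 0" using Fw s Ja by (simp add: st_def flip_def)
        have e2: "F v = g t + G M ni (Sm v) 1 1 1 0" using Fv' s by (simp add: st_def)
        show ?thesis using lt e1 e2 G_a[of M ni "Sm v" 1 1 0] at SS SS2 by linarith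
      next
        assume s: "st v = (1,1,1,1)" and r: "reach g n (trunc n v)"
        have e1: "F w = g t + G M ni (Sm v) 0 1 1 1" using Fw s Ja by (simp add: st_def flip_def)
        have e2: "F v = g t + G M ni (Sm v) 1 1 1 1" using Fv' s by (simp add: st_def)
        show ?thesis using lt e1 e2 G_a[of M ni "Sm v" 1 1 1] at by linarith
      qed
    next
      case Jb
      have Fw: "F w = g t + G M ni (Sm v) (flip v j n) (flip v j (n+1)) (flip v j (n+2)) (flip v j (n+3))"
        using Fout[of j v] w Jb t_def by simp
      have tw: "trunc n w = t" using fl_out[of j v] w Jb t_def by simp
      have Stv: "Sm t = Sm v" using Str t_def by simp
      from Iv[unfolded Inv_def] show ?thesis
      proof (elim conjE disjE)
        assume s: "st v = (0,0,0,0)" and r: "reach g n (trunc n v)"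
        have e1: "F w = g t + G M ni (Sm v) 0 1 0 0" using Fw s Jb by (simp add: st_def flip_def)
        have e2: "F v = g t + G M ni (Sm v) 0 0 0 0" using Fv' s by (simp add: st_def)
        show ?thesis using lt e1 e2 G_b[of M ni "Sm v" 0 0 0] at by linarith
      next
        assume s: "st v = (1,0,0,0)" and r: "trunc n v = ones n"
        have SS: "Sm v = ni" using Stv r t_def Sones by simp
        have SS2: "M*Sm v = M*ni" "M*ni*Sm v = M*ni*ni" using SS by simp_all
        have "st w = (1,1,0,0)" using s w Jb by (simp add: st_def flip_def)
        then show ?thesis using wc by (simp add: Inv_def)
      next
        assume s: "st v = (1,1,0,0)"
        have e1: "F w = g t + G M ni (Sm v) 1 0 0 0" using Fw s Jb by (simp add: st_def flip_def)
        have e2: "F v = g t + G M ni (Sm v) 1 1 0 0" using Fv' s by (simp add: st_def)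
        show ?thesis using lt e1 e2 G_b[of M ni "Sm v" 1 0 0] at by linarith
      next
        assume s: "st v = (1,1,1,0)" and r: "trunc n v = origin"
        have SS: "Sm v = 0" using Stv r t_def Sorig by simp
        have SS2: "M*Sm v = 0" "M*ni*Sm v = 0" using SS by simp_all
        have e1: "F w = g t + G M ni (Sm v) 1 0 1 0" using Fw s Jb by (simp add: st_def flip_def)
        have e2: "F v = g t + G M ni (Sm v) 1 1 1 0" using Fv' s by (simp add: st_def)
        show ?thesis using lt e1 e2 G_b[of M ni "Sm v" 1 1 0] at SS SS2 by linarith
      next
        assume s: "st v = (1,1,1,1)" and r: "reach g n (trunc n v)"
        have e1: "F w = g t + G M ni (Sm v) 1 0 1 1" using Fw s Jb by (simp add: st_def flip_def)
        have e2: "F v = g t + G M ni (Sm v) 1 1 1 1" using Fv' s by (simp add: st_def)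
        show ?thesis using lt e1 e2 G_b[of M ni "Sm v" 1 1 1] at by linarith
      qed
    next
      case Jc
      have Fw: "F w = g t + G M ni (Sm v) (flip v j n) (flip v j (n+1)) (flip v j (n+2)) (flip v j (n+3))"
        using Fout[of j v] w Jc t_def by simp
      have tw: "trunc n w = t" using fl_out[of j v] w Jc t_def by simp
      have Stv: "Sm t = Sm v" using Str t_def by simp
      from Iv[unfolded Inv_def] show ?thesis
      proof (elim conjE disjE)
        assume s: "st v = (0,0,0,0)" and r: "reach g n (trunc n v)"
        have e1: "F w = g t + G M ni (Sm v) 0 0 1 0" using Fw s Jc by (simp add: st_def flip_def)
        have e2: "F v = g t + G M ni (Sm v) 0 0 0 0" using Fv' s by (simp add: st_def)
        show ?thesis using lt e1 e2 G_c[of M ni "Sm v" 0 0 0] at by linarith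
      next
        assume s: "st v = (1,0,0,0)" and r: "trunc n v = ones n"
        have SS: "Sm v = ni" using Stv r t_def Sones by simp
        have SS2: "M*Sm v = M*ni" "M*ni*Sm v = M*ni*ni" using SS by simp_all
        have e1: "F w = g t + G M ni (Sm v) 1 0 1 0" using Fw s Jc by (simp add: st_def flip_def)
        have e2: "F v = g t + G M ni (Sm v) 1 0 0 0" using Fv' s by (simp add: st_def)
        show ?thesis using lt e1 e2 G_c[of M ni "Sm v" 1 0 0] at SS SS2 by linarith
      next
        assume s: "st v = (1,1,0,0)"
        have e1: "F w = g t + G M ni (Sm v) 1 1 1 0" using Fw s Jc by (simp add: st_def flip_def)
        have e2: "F v = g t + G M ni (Sm v) 1 1 0 0" using Fv' s by (simp add: st_def)
        have "Sm v \<le> 0" using lt e1 e2 G_c[of M ni "Sm v" 1 1 0] at by linarith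
        then have "t = origin" using sum_zero[OF tcv] Stv by (simp add: Sm_def)
        moreover have "st w = (1,1,1,0)" using s w Jc by (simp add: st_def flip_def)
        ultimately show ?thesis using wc tw t_def by (simp add: Inv_def)
      next
        assume s: "st v = (1,1,1,0)" and r: "trunc n v = origin"
        have SS: "Sm v = 0" using Stv r t_def Sorig by simp
        have SS2: "M*Sm v = 0" "M*ni*Sm v = 0" using SS by simp_all
        have e1: "F w = g t + G M ni (Sm v) 1 1 0 0" using Fw s Jc by (simp add: st_def flip_def)
        have e2: "F v = g t + G M ni (Sm v) 1 1 1 0" using Fv' s by (simp add: st_def)
        show ?thesis using lt e1 e2 G_c[of M ni "Sm v" 1 1 0] at SS SS2 by linarith
      next
        assume s: "st v = (1,1,1,1)" and r: "reach g n (trunc n v)"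
        have e1: "F w = g t + G M ni (Sm v) 1 1 0 1" using Fw s Jc by (simp add: st_def flip_def)
        have e2: "F v = g t + G M ni (Sm v) 1 1 1 1" using Fv' s by (simp add: st_def)
        show ?thesis using lt e1 e2 G_c[of M ni "Sm v" 1 1 1] at by linarith
      qed
    next
      case Jd
      have Fw: "F w = g t + G M ni (Sm v) (flip v j n) (flip v j (n+1)) (flip v j (n+2)) (flip v j (n+3))"
        using Fout[of j v] w Jd t_def by simp
      have tw: "trunc n w = t" using fl_out[of j v] w Jd t_def by simp
      have Stv: "Sm t = Sm v" using Str t_def by simp
      from Iv[unfolded Inv_def] show ?thesis
      proof (elim conjE disjE)
        assume s: "st v = (0,0,0,0)" and r: "reach g n (trunc n v)"
        have e1: "F w = g t + G M ni (Sm v) 0 0 0 1" using Fw s Jd by (simp add: st_def flip_def)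
        have e2: "F v = g t + G M ni (Sm v) 0 0 0 0" using Fv' s by (simp add: st_def)
        show ?thesis using lt e1 e2 G_d[of M ni "Sm v" 0 0 0] at by linarith
      next
        assume s: "st v = (1,0,0,0)" and r: "trunc n v = ones n"
        have SS: "Sm v = ni" using Stv r t_def Sones by simp
        have SS2: "M*Sm v = M*ni" "M*ni*Sm v = M*ni*ni" using SS by simp_all
        have e1: "F w = g t + G M ni (Sm v) 1 0 0 1" using Fw s Jd by (simp add: st_def flip_def)
        have e2: "F v = g t + G M ni (Sm v) 1 0 0 0" using Fv' s by (simp add: st_def)
        show ?thesis using lt e1 e2 G_d[of M ni "Sm v" 1 0 0] at SS SS2 by linarith
      next
        assume s: "st v = (1,1,0,0)"
        have e1: "F w = g t + G M ni (Sm v) 1 1 0 1" using Fw s Jd by (simp add: st_def flip_def)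
        have e2: "F v = g t + G M ni (Sm v) 1 1 0 0" using Fv' s by (simp add: st_def)
        show ?thesis using lt e1 e2 G_d[of M ni "Sm v" 1 1 0] at by linarith
      next
        assume s: "st v = (1,1,1,0)" and r: "trunc n v = origin"
        have SS: "Sm v = 0" using Stv r t_def Sorig by simp
        have SS2: "M*Sm v = 0" "M*ni*Sm v = 0" using SS by simp_all
        have "reach g n origin" by (rule reach.r0)
        moreover have "st w = (1,1,1,1)" using s w Jd by (simp add: st_def flip_def)
        ultimately show ?thesis using wc tw t_def r by (simp add: Inv_def)
      next
        assume s: "st v = (1,1,1,1)" and r: "reach g n (trunc n v)"
        have e1: "F w = g t + G M ni (Sm v) 1 1 1 0" using Fw s Jd by (simp add: st_def flip_def)
        have e2: "F v = g t + G M ni (Sm v) 1 1 1 1" using Fv' s by (simp add: st_def)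
        show ?thesis using lt e1 e2 G_d[of M ni "Sm v" 1 1 1] at by linarith
      qed
    qed
  qed
  show "reach F (n+4) v \<Longrightarrow> local_max F (n+4) v \<Longrightarrow> v = ones (n+4)"
  proof -
    assume R: "reach F (n+4) v" and L: "local_max F (n+4) v"
    have Iv: "Inv v" using inv[OF R] .
    have vc: "v \<in> cube (n+4)" using L by (simp add: local_max_def)
    have lm: "\<not> F v < F (flip v j)" if "j < n+4" for j
      using L vc that by (auto simp: local_max_def adjacent_iff)
    define t where "t = trunc n v"
    have tcv: "t \<in> cube n" using tc[OF vc] by (simp add: t_def)
    have Fv': "F v = g t + G M ni (Sm v) (v n) (v (n+1)) (v (n+2)) (v (n+3))" using Fv t_def by simp
    have Stv: "Sm t = Sm v" using Str t_def by simp
    note at = AT[OF vc] M1 ni2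
    have FX: "F (flip v j) = g (flip t j) + G M ni (Sm v) (v n) (v (n+1)) (v (n+2)) (v (n+3))
       + (1 - 2 * v j) * ((M*ni+M)*v n - 2*(M*ni)*v (n+1) - 4*v (n+2) + (M*ni - M + 4)*v (n+3))"
      if "j < n" for j using Fin[OF that, of v] t_def by simp
    have tj: "t j = v j" if "j < n" for j using that t_def by (simp add: trunc_def)
    have FO: "F (flip v j) = g t + G M ni (Sm v) (flip v j n) (flip v j (n+1)) (flip v j (n+2)) (flip v j (n+3))"
      if "n \<le> j" for j using Fout[OF that, of v] t_def by simp
    have lift: "local_max g n t" if s0: "(v n) * 0 = 0" and K: "(M*ni+M)*v n - 2*(M*ni)*v (n+1) - 4*v (n+2) + (M*ni - M + 4)*v (n+3) = 0"
    proof (rule ccontr)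
      assume "\<not> local_max g n t"
      then obtain t' where a: "adjacent n t t'" and lt: "g t < g t'" using tcv by (auto simp: local_max_def)
      then obtain j where j: "j < n" and t': "t' = flip t j" by (auto simp: adjacent_iff)
      have "F (flip v j) = g t' + G M ni (Sm v) (v n) (v (n+1)) (v (n+2)) (v (n+3))"
        using FX[OF j] K t' by simp
      then show False using lm[of j] j lt Fv' by simp
    qed
    from Iv[unfolded Inv_def] show ?thesis
    proof (elim conjE disjE)
      assume s: "st v = (0,0,0,0)" and r: "reach g n (trunc n v)"
      have "local_max g n t" using lift s by (simp add: st_def)
      then have "t = ones n" using IH r t_def by simp
      then have SS: "Sm v = ni" using Stv Sones by simp
      have SS2: "M*Sm v = M*ni" "M*ni*Sm v = M*ni*ni" using SS by simp_all
      have e1: "F (flip v n) = g t + G M ni (Sm v) 1 0 0 0" using FO[of n] s by (simp add: st_def flip_def)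
      have e2: "F v = g t + G M ni (Sm v) 0 0 0 0" using Fv' s by (simp add: st_def)
      show ?thesis using lm[of n] e1 e2 G_a[of M ni "Sm v" 0 0 0] at SS SS2 by linarith
    next
      assume s: "st v = (1,0,0,0)" and r: "trunc n v = ones n"
      have SS: "Sm v = ni" using Stv r t_def Sones by simp
      have SS2: "M*Sm v = M*ni" "M*ni*Sm v = M*ni*ni" using SS by simp_all
      have e1: "F (flip v (n+1)) = g t + G M ni (Sm v) 1 1 0 0" using FO[of "n+1"] s by (simp add: st_def flip_def)
      have e2: "F v = g t + G M ni (Sm v) 1 0 0 0" using Fv' s by (simp add: st_def)
      show ?thesis using lm[of "n+1"] e1 e2 G_b[of M ni "Sm v" 1 0 0] at SS SS2 by linarith
    next
      assume s: "st v = (1,1,0,0)"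
      show ?thesis
      proof (cases "Sm v \<le> 0")
        case True
        then have SS: "Sm v = 0" using at by linarith
        have e1: "F (flip v (n+2)) = g t + G M ni (Sm v) 1 1 1 0" using FO[of "n+2"] s by (simp add: st_def flip_def)
        have e2: "F v = g t + G M ni (Sm v) 1 1 0 0" using Fv' s by (simp add: st_def)
        show ?thesis using lm[of "n+2"] e1 e2 G_c[of M ni "Sm v" 1 1 0] at SS by linarith
      next
        case False
        have "\<exists>j<n. v j = 1"
        proof (rule ccontr)
          assume "\<not> (\<exists>j<n. v j = 1)"
          have "\<forall>j<n. v j = 0"
          proof (intro allI impI)
            fix j assume "j < n"
            then have "j < n+4" "\<not> v j = 1" using `\<not> (\<exists>j<n. v j = 1)` by auto
            then show "v j = 0" using cube_vals[OF vc] by blast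
          qed
          then have "Sm v = 0" by (simp add: Sm_def)
          then show False using False by simp
        qed
        then obtain j where j: "j < n" and vj: "v j = 1" by blast
        have adj: "adjacent n t (flip t j)" using tcv j by (auto simp: adjacent_iff)
        have gp: "g t - g (flip t j) < M"
          using gap adj tcv by (auto simp: adjacent_def)
        have "F (flip v j) - F v = g (flip t j) - g t + (M*ni - M)" using FX[OF j] Fv' s vj by (simp add: st_def)
        then show ?thesis using lm[of j] j gp at by linarith
      qed
    next
      assume s: "st v = (1,1,1,0)" and r: "trunc n v = origin"
      have SS: "Sm v = 0" using Stv r t_def Sorig by simp
      have SS2: "M*Sm v = 0" "M*ni*Sm v = 0" using SS by simp_all
      have e1: "F (flip v (n+3)) = g t + G M ni (Sm v) 1 1 1 1" using FO[of "n+3"] s by (simp add: st_def flip_def)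
      have e2: "F v = g t + G M ni (Sm v) 1 1 1 0" using Fv' s by (simp add: st_def)
      show ?thesis using lm[of "n+3"] e1 e2 G_d[of M ni "Sm v" 1 1 1] at SS SS2 by linarith
    next
      assume s: "st v = (1,1,1,1)" and r: "reach g n (trunc n v)"
      have "local_max g n t" using lift s by (simp add: st_def algebra_simps)
      then have to: "t = ones n" using IH r t_def by simp
      show ?thesis
      proof
        fix i show "v i = ones (n+4) i"
        proof (cases "i < n")
          case True then show ?thesis using to t_def by (simp add: trunc_def ones_def fun_eq_iff) (metis)
        next
          case False
          show ?thesis
          proof (cases "i < n+4")
            case True
            then have "i = n \<or> i = n+1 \<or> i = n+2 \<or> i = n+3" using False by linarith
            then show ?thesis using s True by (auto simp: st_def ones_def)
          next
            case False then show ?thesis using vc by (simp add: cube_def ones_def)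
          qed
        qed
      qed
    qed
  qed
qed


lemma base_case: "local_max (fpoly 0) 2 v \<Longrightarrow> v = ones 2"
proof -
  assume L: "local_max (fpoly 0) 2 v"
  have vc: "v \<in> cube 2" using L by (simp add: local_max_def)
  have lm: "\<not> fpoly 0 v < fpoly 0 (flip v j)" if "j < 2" for j
    using L vc that by (auto simp: local_max_def adjacent_iff)
  have v0: "v 0 = 1"
  proof (rule ccontr)
    assume "v 0 \<noteq> 1"
    then have "v 0 = 0" using cube_vals[OF vc, of 0] by simp
    then show False using lm[of 0] by (simp add: flip_def)
  qed
  have v1: "v 1 = 1"
  proof (rule ccontr)
    assume "v 1 \<noteq> 1"
    then have "v 1 = 0" using cube_vals[OF vc, of 1] by simp
    then show False using lm[of 1] by (simp add: flip_def)
  qed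
  show "v = ones 2"
  proof
    fix i show "v i = ones 2 i"
    proof (cases "i < 2")
      case True
      then have "i = 0 \<or> i = 1" by auto
      then show ?thesis using v0 v1 by (auto simp: ones_def)
    next
      case False then show ?thesis using vc by (simp add: cube_def ones_def)
    qed
  qed
qed

lemma all_k: "reach (fpoly k) (4*k+2) v \<Longrightarrow> local_max (fpoly k) (4*k+2) v \<Longrightarrow> v = ones (4*k+2)"
proof (induction k arbitrary: v)
  case 0
  have e0: "4 * (0::nat) + 2 = 2" by simp
  have "local_max (fpoly 0) 2 v" using "0.prems"(2) by (simp only: e0)
  then show ?case using base_case by (simp only: e0)
next
  case (Suc k)
  have dep: "fpoly k x = fpoly k (trunc (4*k+2) x)" for x
    by (rule fpoly_dep) (simp add: trunc_def)
  have e: "4 * Suc k + 2 = (4*k+2) + 4" by simp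
  have "reach (fpoly (Suc k)) ((4*k+2)+4) v" "local_max (fpoly (Suc k)) ((4*k+2)+4) v"
    using Suc.prems by (simp_all only: e)
  then have "v = ones ((4*k+2)+4)"
    using step[of "4*k+2" "fpoly k" "Max (fpoly k ` cube (4*k+2)) - Min (fpoly k ` cube (4*k+2)) + 1" "fpoly (Suc k)" v]
      dep Suc.IH fpoly_Suc by simp
  then show ?case by (simp only: e)
qed

lemma path_reach:
  assumes "increasing_path f m vs" "hd vs = origin"
  shows "j < length vs \<Longrightarrow> reach f m (vs ! j)"
proof (induction j)
  case 0
  have "vs \<noteq> []" using assms(1) by (simp add: increasing_path_def)
  then show ?case using assms(2) reach.r0[of f m] by (simp add: hd_conv_nth)
next
  case (Suc j)
  then have "reach f m (vs ! j)" by simp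
  moreover have "adjacent m (vs ! j) (vs ! Suc j) \<and> f (vs ! j) < f (vs ! Suc j)"
    using assms(1) Suc.prems by (simp add: increasing_path_def)
  ultimately show ?case using reach.rs by blast
qed

theorem lemma2:
  fixes k :: nat and vs :: "(nat \<Rightarrow> int) list"
  assumes "maximal_increasing_path (fpoly k) (4 * k + 2) vs"
    and "hd vs = origin"
  shows "last vs = ones (4 * k + 2)"
proof -
  have ip: "increasing_path (fpoly k) (4 * k + 2) vs" and lm: "local_max (fpoly k) (4 * k + 2) (last vs)"
    using assms(1) by (simp_all add: maximal_increasing_path_def)
  have ne: "vs \<noteq> []" using ip by (simp add: increasing_path_def)
  have "reach (fpoly k) (4 * k + 2) (vs ! (length vs - 1))"
    using path_reach[OF ip assms(2)] ne by simp
  then have "reach (fpoly k) (4 * k + 2) (last vs)" using ne by (simp add: last_conv_nth)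
  then show ?thesis using all_k lm by simp
qed

end
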